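(* Let $\mathcal{M}=(M_i\colon i\in K)$ be a family of matroids on a common ground set $E$ which admits a covering. Then for every nonempty family $(X_\alpha\colon\alpha<\kappa)$ of $\mathcal{M}$-tight sets, both $\bigcup_{\alpha<\kappa}X_\alpha$ and $\bigcap_{\alpha<\kappa}X_\alpha$ are $\mathcal{M}$-tight.
   Context: Matroids here are possibly infinite (given by independence axioms: $\emptyset$ independent, subsets of independent sets independent, the augmentation axiom relative to maximal independent sets, and that every independent subset of any $X\subseteq E$ extends to a maximal independent subset of $X$). Circuits are minimal dependent sets; $X$ spans $e$ in $M$ if $e\in X$ or some circuit $C\ni e$ has $C\setminus\{e\}\subseteq X$. For $X\subseteq E$, $M\restriction X=(X,\mathcal{I}\cap\mathcal{P}(X))$ and $\mathcal{M}\restriction X=(M_i\restriction X\colon i\in K)$. A covering of a family $(N_i\colon i\in K)$ of matroids on a set $Y$ is a family $(R_i\colon i\in K)$ with $R_i$ independent in $N_i$ and $\bigcup_i R_i=Y$. A family is tight if it admits a covering and in every covering each $R_i$ spans the whole ground set in $N_i$. A set $X\subseteq E$ is $\mathcal{M}$-tight if $\mathcal{M}\restriction X$ is tight. *)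

theory Defs
  imports Main
begin

text \<open>A (possibly infinite) matroid on ground set E, given by its set of independent sets.\<close>

definition max_indep_subset :: "'a set set \<Rightarrow> 'a set \<Rightarrow> 'a set \<Rightarrow> bool" where
  "max_indep_subset Ind X B \<longleftrightarrow>
     B \<subseteq> X \<and> B \<in> Ind \<and> (\<forall>B'. B \<subseteq> B' \<and> B' \<subseteq> X \<and> B' \<in> Ind \<longrightarrow> B' = B)"

definition matroid :: "'a set \<Rightarrow> 'a set set \<Rightarrow> bool" where
  "matroid E Ind \<longleftrightarrow>
     Ind \<subseteq> Pow E \<and>
     {} \<in> Ind \<and>
     (\<forall>I J. J \<in> Ind \<and> I \<subseteq> J \<longrightarrow> I \<in> Ind) \<and>
     (\<forall>I B. I \<in> Ind \<and> \<not> max_indep_subset Ind E I \<and> max_indep_subset Ind E B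
            \<longrightarrow> (\<exists>x \<in> B - I. insert x I \<in> Ind)) \<and>
     (\<forall>X I. X \<subseteq> E \<and> I \<in> Ind \<and> I \<subseteq> X \<longrightarrow> (\<exists>B. I \<subseteq> B \<and> max_indep_subset Ind X B))"

definition circuit :: "'a set \<Rightarrow> 'a set set \<Rightarrow> 'a set \<Rightarrow> bool" where
  "circuit Y Ind C \<longleftrightarrow> C \<subseteq> Y \<and> C \<notin> Ind \<and> (\<forall>C'. C' \<subset> C \<longrightarrow> C' \<in> Ind)"

definition spans :: "'a set \<Rightarrow> 'a set set \<Rightarrow> 'a set \<Rightarrow> 'a \<Rightarrow> bool" where
  "spans Y Ind S e \<longleftrightarrow> e \<in> S \<or> (\<exists>C. circuit Y Ind C \<and> e \<in> C \<and> C - {e} \<subseteq> S)"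

definition restr :: "'a set set \<Rightarrow> 'a set \<Rightarrow> 'a set set" where
  "restr Ind X = Ind \<inter> Pow X"

definition covering :: "'k set \<Rightarrow> ('k \<Rightarrow> 'a set set) \<Rightarrow> 'a set \<Rightarrow> ('k \<Rightarrow> 'a set) \<Rightarrow> bool" where
  "covering K J Y R \<longleftrightarrow> (\<forall>i \<in> K. R i \<in> J i) \<and> (\<Union>i \<in> K. R i) = Y"

definition tight :: "'k set \<Rightarrow> ('k \<Rightarrow> 'a set set) \<Rightarrow> 'a set \<Rightarrow> bool" where
  "tight K J Y \<longleftrightarrow> (\<exists>R. covering K J Y R) \<and>
     (\<forall>R. covering K J Y R \<longrightarrow> (\<forall>i \<in> K. \<forall>e \<in> Y. spans Y (J i) (R i) e))"

definition M_tight :: "'k set \<Rightarrow> ('k \<Rightarrow> 'a set set) \<Rightarrow> 'a set \<Rightarrow> bool" where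
  "M_tight K Ind X \<longleftrightarrow> tight K (\<lambda>i. restr (Ind i) X) X"

end

theory Submission imports Defs begin
lemma matroidD:
  assumes "matroid E Ind"
  shows "Ind \<subseteq> Pow E" "{} \<in> Ind" "\<And>I J. J \<in> Ind \<Longrightarrow> I \<subseteq> J \<Longrightarrow> I \<in> Ind"
    "\<And>I B. I \<in> Ind \<Longrightarrow> \<not> max_indep_subset Ind E I \<Longrightarrow> max_indep_subset Ind E B \<Longrightarrow> \<exists>x\<in>B-I. insert x I \<in> Ind"
    "\<And>X I. X \<subseteq> E \<Longrightarrow> I \<in> Ind \<Longrightarrow> I \<subseteq> X \<Longrightarrow> \<exists>B. I \<subseteq> B \<and> max_indep_subset Ind X B"
  using assms unfolding matroid_def by metis+

lemma misD:
  assumes "max_indep_subset Ind X B"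
  shows "B \<subseteq> X" "B \<in> Ind" "\<And>B'. B \<subseteq> B' \<Longrightarrow> B' \<subseteq> X \<Longrightarrow> B' \<in> Ind \<Longrightarrow> B' = B"
  using assms unfolding max_indep_subset_def by metis+

lemma misI:
  assumes "B \<subseteq> X" "B \<in> Ind" "\<And>B'. B \<subseteq> B' \<Longrightarrow> B' \<subseteq> X \<Longrightarrow> B' \<in> Ind \<Longrightarrow> B' = B"
  shows "max_indep_subset Ind X B"
  using assms unfolding max_indep_subset_def by metis
lemma F3E:
  assumes M: "matroid E Ind" and XE: "X \<subseteq> E" and mB: "max_indep_subset Ind X B"
    and mBE: "max_indep_subset Ind E BE" and BBE: "B \<subseteq> BE" and P: "P \<in> Ind" "P \<subseteq> X"
  shows "P \<union> (BE - B) \<in> Ind"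
proof -
  note D = matroidD[OF M]
  note B = misD[OF mB] and BE = misD[OF mBE]
  have PE: "P \<union> BE \<subseteq> E" using P XE BE(1) by auto
  obtain Q where PQ: "P \<subseteq> Q" and mQ: "max_indep_subset Ind (P \<union> BE) Q" using D(5)[OF PE P(1)] by blast
  note Q = misD[OF mQ]
  have QE: "max_indep_subset Ind E Q"
  proof (rule ccontr)
    assume "\<not> ?thesis"
    then obtain x where x: "x \<in> BE - Q" "insert x Q \<in> Ind" using D(4)[OF Q(2) _ mBE] by blast
    have "insert x Q \<subseteq> P \<union> BE" using x(1) Q(1) by auto
    hence "insert x Q = Q" using Q(3)[of "insert x Q"] x(2) by blast
    with x show False by auto
  qed
  show ?thesis
  proof (cases "BE - B \<subseteq> Q")
    case True
    hence "P \<union> (BE - B) \<subseteq> Q" using PQ by auto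
    thus ?thesis using D(3)[OF Q(2)] by blast
  next
    case False
    then obtain z where z: "z \<in> BE - B" "z \<notin> Q" by auto
    let ?B0 = "B \<union> (Q \<inter> (BE - B))"
    have B0sub: "?B0 \<subseteq> BE" using BBE by auto
    have B0: "?B0 \<in> Ind" using D(3)[OF BE(2) B0sub] .
    have "\<not> max_indep_subset Ind E ?B0"
    proof
      assume "max_indep_subset Ind E ?B0"
      hence "BE = ?B0" using misD(3)[of Ind E ?B0 BE] B0sub BE(1) BE(2) by blast
      with z show False by auto
    qed
    then obtain x where x: "x \<in> Q - ?B0" "insert x ?B0 \<in> Ind" using D(4)[OF B0 _ QE] by blast
    have "x \<in> P \<union> BE" using x(1) Q(1) by auto
    hence xX: "x \<in> X" "x \<notin> B" using P x(1) by auto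
    have "insert x B \<in> Ind" by (rule D(3)[OF x(2)]) auto
    moreover have "insert x B \<subseteq> X" using xX B(1) by auto
    ultimately have "insert x B = B" using B(3)[of "insert x B"] by blast
    with xX show ?thesis by auto
  qed
qed

lemma RI3:
  assumes M: "matroid E Ind" and XE: "X \<subseteq> E" and I: "I \<in> Ind" "I \<subseteq> X"
    and nm: "\<not> max_indep_subset Ind X I" and mB: "max_indep_subset Ind X B"
  shows "\<exists>x\<in>B-I. insert x I \<in> Ind"
proof -
  note D = matroidD[OF M]
  note B = misD[OF mB]
  have "B \<subseteq> E" using B(1) XE by auto
  then obtain BE where BBE: "B \<subseteq> BE" and mBE: "max_indep_subset Ind E BE" using D(5)[of E B] B(2) by blast
  note BE = misD[OF mBE]
  have BEX: "BE \<inter> X \<subseteq> B"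
  proof
    fix y assume y: "y \<in> BE \<inter> X"
    have "insert y B \<subseteq> BE" using y BBE by auto
    hence "insert y B \<in> Ind" using D(3)[OF BE(2)] by blast
    moreover have "insert y B \<subseteq> X" using y B(1) by auto
    ultimately have "insert y B = B" using B(3)[of "insert y B"] by blast
    thus "y \<in> B" by auto
  qed
  obtain J where J: "I \<subseteq> J" "J \<subseteq> X" "J \<in> Ind" "J \<noteq> I"
    using nm I misI[of I X Ind] by blast
  have IZ: "I \<union> (BE - B) \<in> Ind" by (rule F3E[OF M XE mB mBE BBE I])
  have JZ: "J \<union> (BE - B) \<in> Ind" by (rule F3E[OF M XE mB mBE BBE J(3) J(2)])
  obtain j where j: "j \<in> J" "j \<notin> I" using J by blast
  have "\<not> max_indep_subset Ind E (I \<union> (BE - B))"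
  proof
    assume a: "max_indep_subset Ind E (I \<union> (BE - B))"
    have "J \<union> (BE - B) \<subseteq> E" using J(2) XE BE(1) by auto
    hence "J \<union> (BE - B) = I \<union> (BE - B)" using misD(3)[OF a, of "J \<union> (BE - B)"] JZ J(1) by blast
    moreover have "j \<notin> BE - B" using j J(2) BEX by auto
    ultimately show False using j by blast
  qed
  then obtain x where x: "x \<in> BE - (I \<union> (BE - B))" "insert x (I \<union> (BE - B)) \<in> Ind"
    using D(4)[OF IZ _ mBE] by blast
  have "insert x I \<in> Ind" by (rule D(3)[OF x(2)]) auto
  moreover have "x \<in> B - I" using x by auto
  ultimately show ?thesis by blast
qed

definition circ :: "'a set set \<Rightarrow> 'a set \<Rightarrow> bool" where
  "circ Ind C \<longleftrightarrow> C \<notin> Ind \<and> (\<forall>C'. C' \<subset> C \<longrightarrow> C' \<in> Ind)"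

lemma fund:
  assumes M: "matroid E Ind" and R: "R \<in> Ind" and eE: "e \<in> E" and dep: "insert e R \<notin> Ind"
  defines "fc \<equiv> insert e {f \<in> R. insert e (R - {f}) \<in> Ind}"
  shows "circ Ind fc" "e \<in> fc" "fc \<subseteq> insert e R" "\<And>D. circ Ind D \<Longrightarrow> D \<subseteq> insert e R \<Longrightarrow> D = fc"
proof -
  note D = matroidD[OF M]
  have eR: "e \<notin> R" using dep R by (metis insert_absorb)
  have XE: "insert e R \<subseteq> E" using R eE D(1) by auto
  have fcsub: "fc \<subseteq> insert e R" unfolding fc_def by auto
  have efc: "e \<in> fc" unfolding fc_def by auto
  have fcI: "fc \<notin> Ind"
  proof
    assume fcI: "fc \<in> Ind"
    obtain B where fB: "fc \<subseteq> B" and mB: "max_indep_subset Ind (insert e R) B"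
      using D(5)[OF XE fcI fcsub] by blast
    note B = misD[OF mB]
    have eB: "e \<in> B" using fB efc by auto
    have "B \<noteq> insert e R" using B(2) dep by auto
    then obtain f where f: "f \<in> insert e R" "f \<notin> B" using B(1) by auto
    have fe: "f \<noteq> e" "f \<in> R" using f eB by auto
    have fnot: "insert e (R - {f}) \<notin> Ind" using f fB fe unfolding fc_def by auto
    have Bsub: "B \<subseteq> insert e (R - {f})" using B(1) f by auto
    have "B \<noteq> insert e (R - {f})" using fnot B(2) by auto
    then obtain f2 where f2: "f2 \<in> R" "f2 \<noteq> f" "f2 \<notin> B" using Bsub eB by auto
    let ?I0 = "insert f (B - {e})"
    have I0R: "?I0 \<subseteq> R" using Bsub fe by auto
    have I0: "?I0 \<in> Ind" using D(3)[OF R I0R] .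
    have I0X: "?I0 \<subseteq> insert e R" using I0R by auto
    have "\<not> max_indep_subset Ind (insert e R) ?I0"
    proof
      assume a: "max_indep_subset Ind (insert e R) ?I0"
      have "R = ?I0" using misD(3)[OF a, of R] R I0R by blast
      with f2 show False by auto
    qed
    then obtain x where x: "x \<in> B - ?I0" "insert x ?I0 \<in> Ind"
      using RI3[OF M XE I0 I0X _ mB] by blast
    have "x = e" using x by auto
    have "insert x ?I0 = insert f B" using \<open>x = e\<close> eB by auto
    hence "insert f B \<in> Ind" using x by simp
    moreover have "insert f B \<subseteq> insert e R" using fe B(1) by auto
    ultimately have "insert f B = B" using B(3)[of "insert f B"] by blast
    with f show False by auto
  qed
  show "circ Ind fc" unfolding circ_def
  proof (intro conjI allI impI fcI)
    fix C' assume C': "C' \<subset> fc"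
    then obtain g where g: "g \<in> fc" "g \<notin> C'" by auto
    show "C' \<in> Ind"
    proof (cases "g = e")
      case True
      hence "C' \<subseteq> R" using C' g unfolding fc_def by auto
      thus ?thesis using D(3)[OF R] by blast
    next
      case False
      hence "g \<in> R" "insert e (R - {g}) \<in> Ind" using g unfolding fc_def by auto
      moreover have "C' \<subseteq> insert e (R - {g})" using C' g unfolding fc_def by auto
      ultimately show ?thesis using D(3) by blast
    qed
  qed
  show "e \<in> fc" by (rule efc)
  show "fc \<subseteq> insert e R" by (rule fcsub)
  fix Dc assume cD: "circ Ind Dc" and DR: "Dc \<subseteq> insert e R"
  have "fc \<subseteq> Dc"
  proof
    fix f assume f: "f \<in> fc"
    show "f \<in> Dc"
    proof (rule ccontr)
      assume nf: "f \<notin> Dc"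
      show False
      proof (cases "f = e")
        case True
        hence "Dc \<subseteq> R" using DR nf by auto
        thus False using cD D(3)[OF R] unfolding circ_def by blast
      next
        case False
        hence "insert e (R - {f}) \<in> Ind" using f unfolding fc_def by auto
        moreover have "Dc \<subseteq> insert e (R - {f})" using DR nf by auto
        ultimately show False using cD D(3) unfolding circ_def by blast
      qed
    qed
  qed
  thus "Dc = fc" using cD fcI unfolding circ_def by blast
qed

lemma F3main:
  assumes M: "matroid E Ind" and S: "S \<in> Ind" and P: "P \<in> Ind" "P \<subseteq> Y"
    and sp: "\<And>x. x \<in> Y \<Longrightarrow> x \<notin> S \<Longrightarrow> insert x (S \<inter> Y) \<notin> Ind"
  shows "P \<union> (S - Y) \<in> Ind"
proof -
  note D = matroidD[OF M]
  have WE: "S \<union> P \<subseteq> E" using S P D(1) by auto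
  obtain Q where PQ: "P \<subseteq> Q" and mQ: "max_indep_subset Ind (S \<union> P) Q"
    using D(5)[OF WE P(1)] by blast
  note Q = misD[OF mQ]
  show ?thesis
  proof (cases "S - Y \<subseteq> Q")
    case True
    hence "P \<union> (S - Y) \<subseteq> Q" using PQ by auto
    thus ?thesis by (rule D(3)[OF Q(2)])
  next
    case False
    then obtain z where z: "z \<in> S - Y" "z \<notin> Q" by auto
    let ?B0 = "(S \<inter> Y) \<union> (Q \<inter> (S - Y))"
    have B0S: "?B0 \<subseteq> S" by auto
    have B0: "?B0 \<in> Ind" by (rule D(3)[OF S B0S])
    have B0W: "?B0 \<subseteq> S \<union> P" by auto
    have "\<not> max_indep_subset Ind (S \<union> P) ?B0"
    proof
      assume a: "max_indep_subset Ind (S \<union> P) ?B0"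
      have "S = ?B0" using misD(3)[OF a, of S] S B0S by blast
      with z show False by auto
    qed
    then obtain x where x: "x \<in> Q - ?B0" "insert x ?B0 \<in> Ind"
      using RI3[OF M WE B0 B0W _ mQ] by blast
    have xW: "x \<in> S \<union> P" using x(1) Q(1) by auto
    have xS: "x \<notin> S" using x(1) by auto
    hence xY: "x \<in> Y" using xW P(2) by auto
    have "insert x (S \<inter> Y) \<in> Ind" by (rule D(3)[OF x(2)]) auto
    with sp[OF xY xS] show ?thesis by simp
  qed
qed

lemma circuit_restr: "circuit Y (restr Ind Y) C \<longleftrightarrow> C \<subseteq> Y \<and> circ Ind C"
  unfolding circuit_def restr_def circ_def by auto

lemma spans_restr: "spans Y (restr Ind Y) S e \<longleftrightarrow> e \<in> S \<or> (\<exists>C. C \<subseteq> Y \<and> circ Ind C \<and> e \<in> C \<and> C - {e} \<subseteq> S)"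
  unfolding spans_def circuit_restr by blast

lemma cov_sub:
  assumes sc: "\<And>i S S'. i \<in> K \<Longrightarrow> S \<in> Ind i \<Longrightarrow> S' \<subseteq> S \<Longrightarrow> S' \<in> Ind i"
    and c: "covering K (\<lambda>i. restr (Ind i) U) U R" and YU: "Y \<subseteq> U"
  shows "covering K (\<lambda>i. restr (Ind i) Y) Y (\<lambda>i. R i \<inter> Y)"
proof -
  have "\<forall>i\<in>K. R i \<inter> Y \<in> restr (Ind i) Y"
    using c sc unfolding covering_def restr_def by blast
  moreover have "(\<Union>i\<in>K. R i \<inter> Y) = Y" using c YU unfolding covering_def by blast
  ultimately show ?thesis unfolding covering_def by blast
qed

lemma cov_E:
  assumes sc: "\<And>i S S'. i \<in> K \<Longrightarrow> S \<in> Ind i \<Longrightarrow> S' \<subseteq> S \<Longrightarrow> S' \<in> Ind i"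
    and c: "covering K Ind E R" and YU: "Y \<subseteq> E"
  shows "covering K (\<lambda>i. restr (Ind i) Y) Y (\<lambda>i. R i \<inter> Y)"
proof -
  have "\<forall>i\<in>K. R i \<inter> Y \<in> restr (Ind i) Y"
    using c sc unfolding covering_def restr_def by blast
  moreover have "(\<Union>i\<in>K. R i \<inter> Y) = Y" using c YU unfolding covering_def by blast
  ultimately show ?thesis unfolding covering_def by blast
qed

lemma tight_disjoint:
  assumes t: "tight K J Y" and c: "covering K J Y R"
    and sc: "\<And>i S S'. i \<in> K \<Longrightarrow> S \<in> J i \<Longrightarrow> S' \<subseteq> S \<Longrightarrow> S' \<in> J i"
    and ik: "i \<in> K" "k \<in> K" "i \<noteq> k"
  shows "R i \<inter> R k = {}"
proof (rule ccontr)
  assume "R i \<inter> R k \<noteq> {}"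
  then obtain f where f: "f \<in> R i" "f \<in> R k" by blast
  define R' where "R' = R(i := R i - {f})"
  have "\<forall>j\<in>K. R' j \<in> J j"
    using c sc unfolding covering_def R'_def by auto
  moreover have "(\<Union>j\<in>K. R' j) = Y"
  proof
    show "(\<Union>j\<in>K. R' j) \<subseteq> Y" using c unfolding covering_def R'_def by auto
    show "Y \<subseteq> (\<Union>j\<in>K. R' j)"
    proof
      fix x assume "x \<in> Y"
      then obtain j where j: "j \<in> K" "x \<in> R j" using c unfolding covering_def by blast
      show "x \<in> (\<Union>j\<in>K. R' j)"
      proof (cases "j = i \<and> x = f")
        case True
        hence "x \<in> R' k" using f ik unfolding R'_def by auto
        thus ?thesis using ik by blast
      next
        case False
        hence "x \<in> R' j" using j unfolding R'_def by auto
        thus ?thesis using j by blast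
      qed
    qed
  qed
  ultimately have cR': "covering K J Y R'" unfolding covering_def by blast
  have fY: "f \<in> Y" using f ik c unfolding covering_def by blast
  have "spans Y (J i) (R' i) f" using t cR' ik fY unfolding tight_def by blast
  hence "spans Y (J i) (R i - {f}) f" unfolding R'_def by simp
  then obtain C where C: "circuit Y (J i) C" "f \<in> C" "C - {f} \<subseteq> R i - {f}"
    unfolding spans_def by blast
  have "C \<subseteq> R i" using C f by blast
  moreover have "R i \<in> J i" using c ik unfolding covering_def by blast
  ultimately have "C \<in> J i" using sc ik by blast
  with C show False unfolding circuit_def by blast
qed

theorem proposition3p6:
  fixes E :: "'a set" and K :: "'k set" and Ind :: "'k \<Rightarrow> 'a set set"
    and A :: "'b set" and X :: "'b \<Rightarrow> 'a set"
  assumes matroids: "\<forall>i \<in> K. matroid E (Ind i)"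
    and has_cover: "\<exists>R. covering K Ind E R"
    and nonempty: "A \<noteq> {}"
    and subsets: "\<forall>\<alpha> \<in> A. X \<alpha> \<subseteq> E"
    and tight_sets: "\<forall>\<alpha> \<in> A. M_tight K Ind (X \<alpha>)"
  shows "M_tight K Ind (\<Union>\<alpha> \<in> A. X \<alpha>) \<and> M_tight K Ind (\<Inter>\<alpha> \<in> A. X \<alpha>)"
proof -
  have sc: "\<And>i S S'. i \<in> K \<Longrightarrow> S \<in> Ind i \<Longrightarrow> S' \<subseteq> S \<Longrightarrow> S' \<in> Ind i"
    using matroids matroidD(3) by blast
  have scr: "\<And>Y i S S'. i \<in> K \<Longrightarrow> S \<in> restr (Ind i) Y \<Longrightarrow> S' \<subseteq> S \<Longrightarrow> S' \<in> restr (Ind i) Y"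
    unfolding restr_def using sc by blast
  obtain R0 where R0: "covering K Ind E R0" using has_cover by blast
  define U where "U = (\<Union>\<alpha> \<in> A. X \<alpha>)"
  define I where "I = (\<Inter>\<alpha> \<in> A. X \<alpha>)"
  obtain \<alpha>0 where a0: "\<alpha>0 \<in> A" using nonempty by blast
  have UE: "U \<subseteq> E" using subsets unfolding U_def by auto
  have IX0: "I \<subseteq> X \<alpha>0" using a0 unfolding I_def by auto
  have IE: "I \<subseteq> E" using IX0 subsets a0 by auto
  have IU: "I \<subseteq> U" using IX0 a0 unfolding U_def by auto
  have tX: "\<And>\<alpha> j S x. \<alpha> \<in> A \<Longrightarrow> j \<in> K \<Longrightarrow> covering K (\<lambda>i. restr (Ind i) U) U S \<Longrightarrow> x \<in> X \<alpha>
     \<Longrightarrow> x \<notin> S j \<Longrightarrow> \<exists>C. C \<subseteq> X \<alpha> \<and> circ (Ind j) C \<and> x \<in> C \<and> C - {x} \<subseteq> S j"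
  proof -
    fix \<alpha> j S x assume a: "\<alpha> \<in> A" "j \<in> K" "covering K (\<lambda>i. restr (Ind i) U) U S" "x \<in> X \<alpha>" "x \<notin> S j"
    have XU: "X \<alpha> \<subseteq> U" using a unfolding U_def by auto
    have cov: "covering K (\<lambda>i. restr (Ind i) (X \<alpha>)) (X \<alpha>) (\<lambda>i. S i \<inter> X \<alpha>)"
      using cov_sub[of K Ind U S "X \<alpha>"] sc a(3) XU by blast
    have "spans (X \<alpha>) (restr (Ind j) (X \<alpha>)) (S j \<inter> X \<alpha>) x"
      using tight_sets a cov unfolding M_tight_def tight_def by blast
    thus "\<exists>C. C \<subseteq> X \<alpha> \<and> circ (Ind j) C \<and> x \<in> C \<and> C - {x} \<subseteq> S j"
      unfolding spans_restr using a(5) by blast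
  qed
  have tU: "M_tight K Ind U"
    unfolding M_tight_def tight_def
  proof (intro conjI allI impI ballI)
    show "\<exists>R. covering K (\<lambda>i. restr (Ind i) U) U R" using cov_E[of K Ind E R0 U] sc R0 UE by blast
    fix R i e assume cR: "covering K (\<lambda>i. restr (Ind i) U) U R" and i: "i \<in> K" and e: "e \<in> U"
    obtain \<alpha> where a: "\<alpha> \<in> A" "e \<in> X \<alpha>" using e unfolding U_def by blast
    have XU: "X \<alpha> \<subseteq> U" using a unfolding U_def by auto
    show "spans U (restr (Ind i) U) (R i) e"
    proof (cases "e \<in> R i")
      case True thus ?thesis unfolding spans_def by blast
    next
      case False
      then obtain C where "C \<subseteq> X \<alpha>" "circ (Ind i) C" "e \<in> C" "C - {e} \<subseteq> R i"
        using tX[OF a(1) i cR a(2)] by blast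
      thus ?thesis unfolding spans_restr using XU by blast
    qed
  qed
  have tUU: "tight K (\<lambda>i. restr (Ind i) U) U" using tU unfolding M_tight_def .
  obtain S where cS: "covering K (\<lambda>i. restr (Ind i) U) U S" using cov_E[of K Ind E R0 U] sc R0 UE by blast
  have Sj: "\<And>j. j \<in> K \<Longrightarrow> S j \<in> Ind j \<and> S j \<subseteq> U" using cS unfolding covering_def restr_def by blast
  have claim1: "\<And>j x. j \<in> K \<Longrightarrow> x \<in> I \<Longrightarrow> x \<notin> S j \<Longrightarrow> insert x (S j \<inter> I) \<notin> Ind j"
  proof
    fix j x assume j: "j \<in> K" and x: "x \<in> I" "x \<notin> S j" and ind: "insert x (S j \<inter> I) \<in> Ind j"
    have M: "matroid E (Ind j)" using matroids j by blast
    have xE: "x \<in> E" using x IE by auto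
    have xa: "\<And>\<alpha>. \<alpha> \<in> A \<Longrightarrow> x \<in> X \<alpha>" using x unfolding I_def by blast
    obtain C0 where C0: "C0 \<subseteq> X \<alpha>0" "circ (Ind j) C0" "x \<in> C0" "C0 - {x} \<subseteq> S j"
      using tX[OF a0 j cS xa[OF a0] x(2)] by blast
    have C0s: "C0 \<subseteq> insert x (S j)" using C0 by auto
    have dep: "insert x (S j) \<notin> Ind j"
      using C0(2) C0s sc[OF j] unfolding circ_def by blast
    have "C0 \<subseteq> X \<alpha>" if a: "\<alpha> \<in> A" for \<alpha>
    proof -
      obtain C where C: "C \<subseteq> X \<alpha>" "circ (Ind j) C" "x \<in> C" "C - {x} \<subseteq> S j"
        using tX[OF a j cS xa[OF a] x(2)] by blast
      have Cs: "C \<subseteq> insert x (S j)" using C by auto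
      have "C = C0" using fund(4)[OF M conjunct1[OF Sj[OF j]] xE dep C(2) Cs]
          fund(4)[OF M conjunct1[OF Sj[OF j]] xE dep C0(2) C0s] by simp
      thus ?thesis using C by simp
    qed
    hence "C0 \<subseteq> I" unfolding I_def by blast
    hence "C0 \<subseteq> insert x (S j \<inter> I)" using C0 by auto
    hence "C0 \<in> Ind j" using sc[OF j ind] by blast
    thus False using C0(2) unfolding circ_def by blast
  qed
  have tI: "M_tight K Ind I"
    unfolding M_tight_def tight_def
  proof (intro conjI allI impI ballI)
    show "\<exists>R. covering K (\<lambda>i. restr (Ind i) I) I R" using cov_E[of K Ind E R0 I] sc R0 IE by blast
    fix R i e assume cR: "covering K (\<lambda>i. restr (Ind i) I) I R" and i: "i \<in> K" and eI: "e \<in> I"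
    show "spans I (restr (Ind i) I) (R i) e"
    proof (rule ccontr)
      assume ns: "\<not> spans I (restr (Ind i) I) (R i) e"
      have eR: "e \<notin> R i" using ns unfolding spans_def by blast
      have Rj: "\<And>j. j \<in> K \<Longrightarrow> R j \<in> Ind j \<and> R j \<subseteq> I" using cR unfolding covering_def restr_def by blast
      have eE: "e \<in> E" using eI IE by auto
      have M: "matroid E (Ind i)" using matroids i by blast
      have indep: "insert e (R i) \<in> Ind i"
      proof (rule ccontr)
        assume dep: "insert e (R i) \<notin> Ind i"
        note F = fund[OF M conjunct1[OF Rj[OF i]] eE dep]
        let ?C = "insert e {f \<in> R i. insert e (R i - {f}) \<in> Ind i}"
        have "?C \<subseteq> I" using F(3) Rj[OF i] eI by blast
        hence "spans I (restr (Ind i) I) (R i) e" unfolding spans_restr using F(1,2,3) by blast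
        with ns show False by blast
      qed
      have F3: "\<And>j P. j \<in> K \<Longrightarrow> P \<in> Ind j \<Longrightarrow> P \<subseteq> I \<Longrightarrow> P \<union> (S j - I) \<in> Ind j"
      proof -
        fix j P assume j: "j \<in> K" and P: "P \<in> Ind j" "P \<subseteq> I"
        show "P \<union> (S j - I) \<in> Ind j"
          by (rule F3main[of E "Ind j" "S j" P I]) (use matroids j Sj P claim1 in auto)
      qed
      define T where "T = (\<lambda>j. if j = i then insert e (R i) \<union> (S i - I) else R j \<union> (S j - I))"
      have TU: "\<forall>j\<in>K. T j \<in> restr (Ind j) U"
      proof
        fix j assume j: "j \<in> K"
        have "T j \<in> Ind j"
        proof (cases "j = i")
          case True
          thus ?thesis unfolding T_def using F3[OF i indep] Rj[OF i] eI by auto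
        next
          case False
          thus ?thesis unfolding T_def using F3[OF j] Rj[OF j] by auto
        qed
        moreover have "T j \<subseteq> U" unfolding T_def using Rj[OF j] Sj[OF j] IU eI by auto
        ultimately show "T j \<in> restr (Ind j) U" unfolding restr_def by blast
      qed
      moreover have "(\<Union>j\<in>K. T j) = U"
      proof
        show "(\<Union>j\<in>K. T j) \<subseteq> U" using TU unfolding restr_def by blast
        show "U \<subseteq> (\<Union>j\<in>K. T j)"
        proof
          fix x assume xU: "x \<in> U"
          show "x \<in> (\<Union>j\<in>K. T j)"
          proof (cases "x \<in> I")
            case True
            then obtain j where "j \<in> K" "x \<in> R j" using cR unfolding covering_def by blast
            moreover hence "x \<in> T j" unfolding T_def by auto
            ultimately show ?thesis by blast
          next
            case False
            then obtain j where "j \<in> K" "x \<in> S j" using cS xU unfolding covering_def by blast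
            moreover hence "x \<in> T j" unfolding T_def using False by auto
            ultimately show ?thesis by blast
          qed
        qed
      qed
      ultimately have cT: "covering K (\<lambda>i. restr (Ind i) U) U T" unfolding covering_def by blast
      obtain k where k: "k \<in> K" "e \<in> R k" using cR eI unfolding covering_def by blast
      have ki: "i \<noteq> k" using k eR by auto
      have "T i \<inter> T k = {}" using tight_disjoint[of K "\<lambda>i. restr (Ind i) U" U T i k] tUU cT scr i k(1) ki by blast
      moreover have "e \<in> T i" "e \<in> T k" unfolding T_def using k ki by auto
      ultimately show False by blast
    qed
  qed
  show ?thesis using tU tI unfolding U_def I_def by blast
qed

end
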